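(* Let $\mathcal I$ be an ideal of a Poisson $n$-Lie algebra $\mathcal P$ of arbitrary dimension. Define $\mathcal I^{1)}=\mathcal I$, $\mathcal I^{k+1)}=\mathcal I^{k)}\cdot\mathcal I$, and $\mathcal I^{(1}=\mathcal I$, $\mathcal I^{(k+1}=[\mathcal I^{(k},\mathcal I,\mathcal P,\dots,\mathcal P]$ for $k\ge1$. Then for every $k\ge1$, $$\mathcal I^k\subseteq\sum_{r_1+\cdots+r_t=k}\mathcal I^{r_1)}\cdot\prod_{i=2}^t\mathcal I^{(r_i},$$ where the sum is over all $t\ge1$ and nonnegative integers $r_1,\dots,r_t$ with $r_1+\cdots+r_t=k$, and factors $\mathcal I^{0)}$, $\mathcal I^{(0}$ are understood to act trivially (multiplication by them leaves the other factor unchanged).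
   Context: A Poisson $n$-Lie algebra is a commutative associative algebra $(\mathcal P,\cdot)$ with an $n$-linear skew-symmetric bracket satisfying the fundamental identity $[x_1,\dots,x_{n-1},[y_1,\dots,y_n]]=\sum_{i=1}^n[y_1,\dots,[x_1,\dots,x_{n-1},y_i],\dots,y_n]$ and the Leibniz rule $[y\cdot z,x_2,\dots,x_n]=y\cdot[z,x_2,\dots,x_n]+z\cdot[y,x_2,\dots,x_n]$. For subspaces, products and brackets denote linear spans. An ideal $\mathcal I$ satisfies $\mathcal P\cdot\mathcal I\subseteq\mathcal I$, $[\mathcal I,\mathcal P,\dots,\mathcal P]\subseteq\mathcal I$. Lower central series: $\mathcal I^1=\mathcal I$, $\mathcal I^{k+1}=[\mathcal I^k,\mathcal I,\mathcal P,\dots,\mathcal P]+\mathcal I^k\cdot\mathcal I$. *)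

theory Defs
  imports Complex_Main
begin

text \<open>A Poisson n-Lie algebra over a field: the underlying vector space is the whole
type 'v (scalar multiplication scale), mul is the commutative associative bilinear
product, and br is the n-ary bracket, applied to lists of length n.\<close>

definition poisson_nlie ::
  "('k::field \<Rightarrow> 'v::ab_group_add \<Rightarrow> 'v) \<Rightarrow> ('v \<Rightarrow> 'v \<Rightarrow> 'v) \<Rightarrow> nat \<Rightarrow> ('v list \<Rightarrow> 'v) \<Rightarrow> bool" where
  "poisson_nlie scale mul n br \<longleftrightarrow>
     vector_space scale \<and>
     \<comment> \<open>bilinear, commutative, associative product\<close>
     (\<forall>x y z. mul (x + y) z = mul x z + mul y z) \<and>
     (\<forall>a x y. mul (scale a x) y = scale a (mul x y)) \<and>
     (\<forall>x y. mul x y = mul y x) \<and>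
     (\<forall>x y z. mul (mul x y) z = mul x (mul y z)) \<and>
     \<comment> \<open>n-linear bracket\<close>
     (\<forall>xs i y z. length xs = n \<longrightarrow> i < n \<longrightarrow>
        br (xs[i := y + z]) = br (xs[i := y]) + br (xs[i := z])) \<and>
     (\<forall>xs i a y. length xs = n \<longrightarrow> i < n \<longrightarrow>
        br (xs[i := scale a y]) = scale a (br (xs[i := y]))) \<and>
     \<comment> \<open>skew-symmetric\<close>
     (\<forall>xs i j. length xs = n \<longrightarrow> i < n \<longrightarrow> j < n \<longrightarrow> i \<noteq> j \<longrightarrow>
        br (xs[i := xs ! j, j := xs ! i]) = - br xs) \<and>
     \<comment> \<open>fundamental identity\<close>
     (\<forall>xs ys. length xs = n - 1 \<longrightarrow> length ys = n \<longrightarrow>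
        br (xs @ [br ys]) = (\<Sum>i<n. br (ys[i := br (xs @ [ys ! i])]))) \<and>
     \<comment> \<open>Leibniz rule\<close>
     (\<forall>y z xs. length xs = n - 1 \<longrightarrow>
        br (mul y z # xs) = mul y (br (z # xs)) + mul z (br (y # xs)))"

definition sp_mul :: "('k::field \<Rightarrow> 'v::ab_group_add \<Rightarrow> 'v) \<Rightarrow> ('v \<Rightarrow> 'v \<Rightarrow> 'v) \<Rightarrow> 'v set \<Rightarrow> 'v set \<Rightarrow> 'v set" where
  "sp_mul scale mul A B = module.span scale {mul a b | a b. a \<in> A \<and> b \<in> B}"

definition sp_br :: "('k::field \<Rightarrow> 'v::ab_group_add \<Rightarrow> 'v) \<Rightarrow> ('v list \<Rightarrow> 'v) \<Rightarrow> 'v set list \<Rightarrow> 'v set" where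
  "sp_br scale br As = module.span scale {br xs | xs. list_all2 (\<in>) xs As}"

definition sp_sum :: "('k::field \<Rightarrow> 'v::ab_group_add \<Rightarrow> 'v) \<Rightarrow> 'v set \<Rightarrow> 'v set \<Rightarrow> 'v set" where
  "sp_sum scale A B = module.span scale (A \<union> B)"

definition is_ideal ::
  "('k::field \<Rightarrow> 'v::ab_group_add \<Rightarrow> 'v) \<Rightarrow> ('v \<Rightarrow> 'v \<Rightarrow> 'v) \<Rightarrow> nat \<Rightarrow> ('v list \<Rightarrow> 'v) \<Rightarrow> 'v set \<Rightarrow> bool" where
  "is_ideal scale mul n br I \<longleftrightarrow>
     module.subspace scale I \<and>
     sp_mul scale mul UNIV I \<subseteq> I \<and>
     sp_br scale br (I # replicate (n - 1) UNIV) \<subseteq> I"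

text \<open>Lower central series I^k (k \<ge> 1; the value at 0 is irrelevant).\<close>
fun lcs :: "('k::field \<Rightarrow> 'v::ab_group_add \<Rightarrow> 'v) \<Rightarrow> ('v \<Rightarrow> 'v \<Rightarrow> 'v) \<Rightarrow> nat \<Rightarrow> ('v list \<Rightarrow> 'v) \<Rightarrow> 'v set \<Rightarrow> nat \<Rightarrow> 'v set" where
  "lcs scale mul n br I 0 = UNIV"
| "lcs scale mul n br I (Suc 0) = I"
| "lcs scale mul n br I (Suc (Suc k)) =
     sp_sum scale
       (sp_br scale br (lcs scale mul n br I (Suc k) # I # replicate (n - 2) UNIV))
       (sp_mul scale mul (lcs scale mul n br I (Suc k)) I)"

fun mpow :: "('k::field \<Rightarrow> 'v::ab_group_add \<Rightarrow> 'v) \<Rightarrow> ('v \<Rightarrow> 'v \<Rightarrow> 'v) \<Rightarrow> 'v set \<Rightarrow> nat \<Rightarrow> 'v set" where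
  "mpow scale mul I 0 = UNIV"
| "mpow scale mul I (Suc 0) = I"
| "mpow scale mul I (Suc (Suc k)) = sp_mul scale mul (mpow scale mul I (Suc k)) I"

fun bpow :: "('k::field \<Rightarrow> 'v::ab_group_add \<Rightarrow> 'v) \<Rightarrow> nat \<Rightarrow> ('v list \<Rightarrow> 'v) \<Rightarrow> 'v set \<Rightarrow> nat \<Rightarrow> 'v set" where
  "bpow scale n br I 0 = UNIV"
| "bpow scale n br I (Suc 0) = I"
| "bpow scale n br I (Suc (Suc k)) =
     sp_br scale br (bpow scale n br I (Suc k) # I # replicate (n - 2) UNIV)"

text \<open>Left-to-right product of a nonempty list of subspaces (the value on [] is never used).\<close>
fun sp_prod :: "('k::field \<Rightarrow> 'v::ab_group_add \<Rightarrow> 'v) \<Rightarrow> ('v \<Rightarrow> 'v \<Rightarrow> 'v) \<Rightarrow> 'v set list \<Rightarrow> 'v set" where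
  "sp_prod scale mul [] = UNIV"
| "sp_prod scale mul (A # As) = foldl (sp_mul scale mul) A As"

text \<open>The term I^{r_1)} \<cdot> \<Prod>_{i\<ge>2} I^{(r_i} for rs = [r_1,...,r_t]; factors with exponent 0
act trivially, i.e. they are omitted.\<close>
fun rterm :: "('k::field \<Rightarrow> 'v::ab_group_add \<Rightarrow> 'v) \<Rightarrow> ('v \<Rightarrow> 'v \<Rightarrow> 'v) \<Rightarrow> nat \<Rightarrow> ('v list \<Rightarrow> 'v) \<Rightarrow> 'v set \<Rightarrow> nat list \<Rightarrow> 'v set" where
  "rterm scale mul n br I [] = UNIV"
| "rterm scale mul n br I (r1 # rs) =
     sp_prod scale mul
       ((if r1 = 0 then [] else [mpow scale mul I r1]) @
        map (bpow scale n br I) (filter (\<lambda>r. r \<noteq> 0) rs))"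

end

theory Submission
  imports Defs
begin

lemma lin_span:
  assumes M: "module scale"
    and add: "\<And>a b. f (a + b) = f a + f b"
    and sc: "\<And>c a. f (scale c a) = scale c (f a)"
    and z: "z \<in> module.span scale X"
    and gen: "\<And>x. x \<in> X \<Longrightarrow> f x \<in> module.span scale Y"
  shows "f z \<in> module.span scale Y"
proof -
  have f0: "f 0 = 0"
  proof -
    have "f 0 = f 0 + f 0" using add[of 0 0] by simp
    then show ?thesis by simp
  qed
  show ?thesis
  proof (rule module.span_induct_alt[OF M z, where h="\<lambda>z. f z \<in> module.span scale Y"])
    show "f 0 \<in> module.span scale Y" using f0 module.span_zero[OF M] by simp
  next
    fix c x y assume "x \<in> X" "f y \<in> module.span scale Y"
    then show "f (scale c x + y) \<in> module.span scale Y"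
      using add sc gen module.span_add[OF M] module.span_scale[OF M] by simp
  qed
qed

definition Ek where
  "Ek scale mul n br I k = {foldl mul x xs | x xs. \<exists>r ws. r \<ge> 1 \<and> x \<in> bpow scale n br I r \<and>
     list_all2 (\<lambda>w y. w \<ge> 1 \<and> y \<in> bpow scale n br I w) ws xs \<and> r + sum_list ws = k}"

lemma foldl_in:
  assumes M: "module scale"
  shows "x \<in> A \<Longrightarrow> list_all2 (\<in>) xs As \<Longrightarrow> foldl mul x xs \<in> foldl (sp_mul scale mul) A As"
proof (induct xs arbitrary: x A As)
  case Nil then show ?case by simp
next
  case (Cons y ys)
  then obtain B Bs where As: "As = B # Bs" and "y \<in> B" "list_all2 (\<in>) ys Bs"
    by (cases As) auto
  have "mul x y \<in> sp_mul scale mul A B"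
    unfolding sp_mul_def using Cons.prems \<open>y \<in> B\<close> by (intro module.span_base[OF M]) blast
  then show ?case using Cons.hyps \<open>list_all2 (\<in>) ys Bs\<close> As by simp
qed

lemma bpow_Suc:
  assumes M: "module scale" and "r \<ge> 1" and "x \<in> bpow scale n br I r" and "i \<in> I"
    and "length ps = n - 2"
  shows "br (x # i # ps) \<in> bpow scale n br I (Suc r)"
proof -
  obtain r' where r: "r = Suc r'" using assms(2) by (cases r) auto
  have "list_all2 (\<in>) ps (replicate (n - 2) UNIV)"
    using assms(5) by (simp add: list_all2_conv_all_nth)
  then show ?thesis using assms r
    by (simp only: r bpow.simps sp_br_def) (rule module.span_base[OF M], auto)
qed


lemma P_module: "poisson_nlie scale mul n br \<Longrightarrow> module scale"
  unfolding poisson_nlie_def by (simp add: vector_space_def module_def)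

lemma P_facts:
  fixes scale :: "'k::field \<Rightarrow> 'v::ab_group_add \<Rightarrow> 'v"
  assumes "poisson_nlie scale mul n br"
  shows P_add: "\<And>x y z. mul (x + y) z = mul x z + mul y z"
    and P_sc: "\<And>a x y. mul (scale a x) y = scale a (mul x y)"
    and P_comm: "\<And>x y. mul x y = mul y x"
    and P_leib: "\<And>y z xs. length xs = n - 1 \<Longrightarrow> br (mul y z # xs) = mul y (br (z # xs)) + mul z (br (y # xs))"
proof -
  note A = assms[unfolded poisson_nlie_def]
  show "\<And>x y z. mul (x + y) z = mul x z + mul y z" using A by (elim conjE) blast
  show "\<And>a x y. mul (scale a x) y = scale a (mul x y)" using A by (elim conjE) blast
  show "\<And>x y. mul x y = mul y x" using A by (elim conjE) blast
  show "\<And>y z xs. length xs = n - 1 \<Longrightarrow> br (mul y z # xs) = mul y (br (z # xs)) + mul z (br (y # xs))"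
  proof -
    fix y z :: 'v and xs :: "'v list" assume h: "length xs = n - (1::nat)"
    have L: "\<forall>y z xs. length xs = n - 1 \<longrightarrow> br (mul y z # xs) = mul y (br (z # xs)) + mul z (br (y # xs))"
      using A by (elim conjE) assumption
    show "br (mul y z # xs) = mul y (br (z # xs)) + mul z (br (y # xs))"
      using L h by (elim allE impE) 
  qed
qed

lemma br_lin:
  assumes "poisson_nlie scale mul n br" and "length xs = n - 1" and "n \<ge> 1"
  shows "br ((a + b) # xs) = br (a # xs) + br (b # xs)"
    and "br (scale c a # xs) = scale c (br (a # xs))"
proof -
  have L1: "\<forall>xs i y z. length xs = n \<longrightarrow> i < n \<longrightarrow>
        br (xs[i := y + z]) = br (xs[i := y]) + br (xs[i := z])"
   and L2: "\<forall>xs i a y. length xs = n \<longrightarrow> i < n \<longrightarrow>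
        br (xs[i := scale a y]) = scale a (br (xs[i := y]))"
    using assms(1) unfolding poisson_nlie_def by blast+
  have len: "length (a # xs) = n" "0 < n" using assms by auto
  show "br ((a + b) # xs) = br (a # xs) + br (b # xs)"
    using L1[rule_format, OF len, of a b] by simp
  show "br (scale c a # xs) = scale c (br (a # xs))"
    using L2[rule_format, OF len, of c a] by simp
qed

lemma mul_gen:
  assumes P: "poisson_nlie scale mul n br"
    and z: "z \<in> module.span scale (Ek scale mul n br I m)"
    and y: "y \<in> bpow scale n br I w" and w: "w \<ge> 1"
  shows "mul z y \<in> module.span scale (Ek scale mul n br I (m + w))"
proof (rule lin_span[OF P_module[OF P] _ _ z])
  show "\<And>a b. mul (a + b) y = mul a y + mul b y" by (rule P_add[OF P])
  show "\<And>c a. mul (scale c a) y = scale c (mul a y)" by (rule P_sc[OF P])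
  fix x assume "x \<in> Ek scale mul n br I m"
  then obtain x0 xs r ws where x: "x = foldl mul x0 xs" "r \<ge> 1" "x0 \<in> bpow scale n br I r"
     "list_all2 (\<lambda>w y. w \<ge> 1 \<and> y \<in> bpow scale n br I w) ws xs" "r + sum_list ws = m"
    unfolding Ek_def by blast
  have "mul x y = foldl mul x0 (xs @ [y])" using x by simp
  moreover have "list_all2 (\<lambda>w y. w \<ge> 1 \<and> y \<in> bpow scale n br I w) (ws @ [w]) (xs @ [y])"
    using x y w by (simp add: list_all2_appendI)
  ultimately have "mul x y \<in> Ek scale mul n br I (m + w)"
    unfolding Ek_def using x by (intro CollectI exI conjI) (auto)
  then show "mul x y \<in> module.span scale (Ek scale mul n br I (m + w))"
    by (rule module.span_base[OF P_module[OF P]])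
qed


lemma Ek_base:
  assumes P: "poisson_nlie scale mul n br" and "r \<ge> 1" and "x \<in> bpow scale n br I r"
  shows "x \<in> module.span scale (Ek scale mul n br I r)"
proof -
  have "x \<in> Ek scale mul n br I r"
    unfolding Ek_def using assms
    by (intro CollectI exI[of _ x] exI[of _ "[]"] conjI exI[of _ r]) auto
  then show ?thesis by (rule module.span_base[OF P_module[OF P]])
qed

lemma br_gen:
  fixes scale :: "'k::field \<Rightarrow> 'v::ab_group_add \<Rightarrow> 'v"
  assumes P: "poisson_nlie scale mul n br" and n: "n \<ge> 2" and i: "i \<in> I"
    and ps: "length ps = n - 2"
  shows "\<And>x r ws. r \<ge> 1 \<Longrightarrow> x \<in> bpow scale n br I r \<Longrightarrow>
     list_all2 (\<lambda>w y. w \<ge> 1 \<and> y \<in> bpow scale n br I w) ws xs \<Longrightarrow>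
     br (foldl mul x xs # i # ps) \<in> module.span scale (Ek scale mul n br I (r + sum_list ws + 1))"
proof (induct xs rule: rev_induct)
  case Nil
  then have "ws = []" by simp
  then show ?case using Nil Ek_base[OF P _ bpow_Suc[OF P_module[OF P] Nil(1,2) i ps]] by simp
next
  case (snoc y xs)
  from snoc.prems(3) obtain ws' w where ws: "ws = ws' @ [w]"
    and h1: "list_all2 (\<lambda>w y. w \<ge> 1 \<and> y \<in> bpow scale n br I w) ws' xs"
    and w: "w \<ge> 1" and y: "y \<in> bpow scale n br I w"
    by (auto simp: list_all2_append2 list_all2_Cons2)
  define a where "a = foldl mul x xs"
  have len: "length (i # ps) = n - 1" using ps n by simp
  have eq: "br (foldl mul x (xs @ [y]) # i # ps) = mul a (br (y # i # ps)) + mul y (br (a # i # ps))"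
    unfolding a_def by (simp add: P_leib[OF P len])
  have IH: "br (a # i # ps) \<in> module.span scale (Ek scale mul n br I (r + sum_list ws' + 1))"
    unfolding a_def using snoc.hyps[OF snoc.prems(1,2) h1] .
  have t2: "mul y (br (a # i # ps)) \<in> module.span scale (Ek scale mul n br I (r + sum_list ws + 1))"
    using mul_gen[OF P IH y w] ws P_comm[OF P, of y] by (simp add: ac_simps)
  have z: "br (y # i # ps) \<in> bpow scale n br I (Suc w)"
    using bpow_Suc[OF P_module[OF P] w y i ps] .
  have "a \<in> Ek scale mul n br I (r + sum_list ws')"
    unfolding Ek_def a_def using snoc.prems(1,2) h1 by blast
  then have "a \<in> module.span scale (Ek scale mul n br I (r + sum_list ws'))"
    by (rule module.span_base[OF P_module[OF P]])
  from mul_gen[OF P this z] have t1: "mul a (br (y # i # ps)) \<in> module.span scale (Ek scale mul n br I (r + sum_list ws + 1))"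
    using ws by (simp add: ac_simps)
  show ?case using eq t1 t2 module.span_add[OF P_module[OF P]] by simp
qed


lemma Ek_sub:
  fixes scale :: "'k::field \<Rightarrow> 'v::ab_group_add \<Rightarrow> 'v"
  assumes P: "poisson_nlie scale mul n br"
  shows "Ek scale mul n br I k \<subseteq> \<Union>{rterm scale mul n br I rs | rs. rs \<noteq> [] \<and> sum_list rs = k}"
proof
  fix e assume "e \<in> Ek scale mul n br I k"
  then obtain x xs r ws where x: "e = foldl mul x xs" "r \<ge> 1" "x \<in> bpow scale n br I r"
     and L: "list_all2 (\<lambda>w y. w \<ge> 1 \<and> y \<in> bpow scale n br I w) ws xs" and k: "r + sum_list ws = k"
    unfolding Ek_def by blast
  have f: "filter (\<lambda>r. r \<noteq> 0) (r # ws) = r # ws"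
  proof -
    have "\<forall>w\<in>set ws. w \<noteq> 0" using L by (fastforce simp: list_all2_conv_all_nth in_set_conv_nth)
    then show ?thesis using x(2) by (simp add: filter_True)
  qed
  have L2: "list_all2 (\<in>) xs (map (bpow scale n br I) ws)"
    using L by (auto simp: list_all2_conv_all_nth)
  have "e \<in> rterm scale mul n br I (0 # r # ws)"
    using foldl_in[OF P_module[OF P] x(3) L2, of mul] x(1) f
    by (simp del: filter.simps)
  moreover have "sum_list (0 # r # ws) = k" using k by simp
  ultimately show "e \<in> \<Union>{rterm scale mul n br I rs | rs. rs \<noteq> [] \<and> sum_list rs = k}"
    by blast
qed

lemma lcs_sub:
  fixes scale :: "'k::field \<Rightarrow> 'v::ab_group_add \<Rightarrow> 'v"
  assumes P: "poisson_nlie scale mul n br" and n: "n \<ge> 2"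
  shows "lcs scale mul n br I (Suc m) \<subseteq> module.span scale (Ek scale mul n br I (Suc m))"
proof (induct m)
  case 0
  show ?case using Ek_base[OF P, of 1 _ I] by auto
next
  case (Suc m)
  have M: "module scale" by (rule P_module[OF P])
  let ?T = "module.span scale (Ek scale mul n br I (Suc (Suc m)))"
  have sT: "module.subspace scale ?T" by (rule module.subspace_span[OF M])
  have A: "sp_br scale br (lcs scale mul n br I (Suc m) # I # replicate (n - 2) UNIV) \<subseteq> ?T"
    unfolding sp_br_def
  proof (rule module.span_minimal[OF M _ sT], safe)
    fix zs assume "list_all2 (\<in>) zs (lcs scale mul n br I (Suc m) # I # replicate (n - 2) UNIV)"
    then obtain a i ps where zs: "zs = a # i # ps" and a: "a \<in> lcs scale mul n br I (Suc m)"
      and i: "i \<in> I" and ps: "length ps = n - 2"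
      by (auto simp: list_all2_Cons2 dest: list_all2_lengthD)
    have len: "length (i # ps) = n - 1" using ps n by simp
    have a': "a \<in> module.span scale (Ek scale mul n br I (Suc m))" using a Suc by blast
    show "br zs \<in> ?T" unfolding zs
    proof (rule lin_span[OF M _ _ a', where f="\<lambda>a. br (a # i # ps)"])
      show "\<And>a b. br ((a + b) # i # ps) = br (a # i # ps) + br (b # i # ps)"
        using br_lin(1)[OF P len] n by simp
      show "\<And>c a. br (scale c a # i # ps) = scale c (br (a # i # ps))"
        using br_lin(2)[OF P len] n by simp
      fix e assume "e \<in> Ek scale mul n br I (Suc m)"
      then obtain x xs r ws where x: "e = foldl mul x xs" "r \<ge> 1" "x \<in> bpow scale n br I r"
        and L: "list_all2 (\<lambda>w y. w \<ge> 1 \<and> y \<in> bpow scale n br I w) ws xs" and k: "r + sum_list ws = Suc m"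
        unfolding Ek_def by blast
      show "br (e # i # ps) \<in> ?T"
        using br_gen[OF P n i ps x(2,3) L] x(1) k by simp
    qed
  qed
  have B: "sp_mul scale mul (lcs scale mul n br I (Suc m)) I \<subseteq> ?T"
    unfolding sp_mul_def
  proof (rule module.span_minimal[OF M _ sT], safe)
    fix a b assume a: "a \<in> lcs scale mul n br I (Suc m)" and b: "b \<in> I"
    have a': "a \<in> module.span scale (Ek scale mul n br I (Suc m))" using a Suc by blast
    show "mul a b \<in> ?T" using mul_gen[OF P a', of b 1] b by simp
  qed
  show ?case
    using A B by (simp add: sp_sum_def module.span_minimal[OF M _ sT])
qed

theorem lemma5p3:
  fixes scale :: "'k::field \<Rightarrow> 'v::ab_group_add \<Rightarrow> 'v"
    and mul :: "'v \<Rightarrow> 'v \<Rightarrow> 'v"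
    and br :: "'v list \<Rightarrow> 'v"
    and n k :: nat
    and I :: "'v set"
  assumes "poisson_nlie scale mul n br"
    and "n \<ge> 2"
    and "is_ideal scale mul n br I"
    and "k \<ge> 1"
  shows "lcs scale mul n br I k \<subseteq>
    module.span scale (\<Union>{rterm scale mul n br I rs | rs. rs \<noteq> [] \<and> sum_list rs = k})"
proof -
  obtain m where k: "k = Suc m" using assms(4) by (cases k) auto
  have "lcs scale mul n br I k \<subseteq> module.span scale (Ek scale mul n br I k)"
    using lcs_sub[OF assms(1,2)] k by simp
  also have "\<dots> \<subseteq> module.span scale (\<Union>{rterm scale mul n br I rs | rs. rs \<noteq> [] \<and> sum_list rs = k})"
    by (rule module.span_mono[OF P_module[OF assms(1)] Ek_sub[OF assms(1)]])
  finally show ?thesis .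
qed

end
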